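(* Let $G=(\mathcal{S},\mathcal{E})$ be a connected undirected graph with node set $\mathcal{S}=\{1,\dots,N\}$, let $I_G\in\mathbb{R}^{|\mathcal{E}|\times N}$ be an oriented incidence matrix of $G$, and let $A:=I_G\otimes I_{n_\theta}=(A_1,\dots,A_N)$ with column blocks $A_i\in\mathbb{R}^{|\mathcal{E}|n_\theta\times n_\theta}$. For $i\in\mathcal{S}$ let $M_i\in\mathbb{R}^{n_y\times n_\theta}$ have full column rank and $y_i\in\mathbb{R}^{n_y}$. Define $$S:=\sum_{i\in\mathcal{S}}A_i(M_i^\top M_i)^{-1}A_i^\top,\qquad s:=-\sum_{i\in\mathcal{S}}A_i(M_i^\top M_i)^{-1}M_i^\top y_i.$$ Then $s\in\operatorname{range}(S)$.
   Context: An oriented incidence matrix of $G$ has one row per edge $(i,j)\in\mathcal{E}$, with entry $+1$ in column $i$, $-1$ in column $j$, and $0$ elsewhere. $\otimes$ denotes the Kronecker product and $I_{n_\theta}$ the $n_\theta\times n_\theta$ identity. *)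

theory Defs
  imports "HOL-Analysis.Analysis"
begin

text \<open>A simple undirected graph on node type 'n whose edges are indexed by the
  finite type 'e; each edge e has an (arbitrarily chosen) orientation
  from src e to tgt e.\<close>

definition simple_oriented_graph :: "('e \<Rightarrow> 'n) \<Rightarrow> ('e \<Rightarrow> 'n) \<Rightarrow> bool" where
  "simple_oriented_graph src tgt \<longleftrightarrow>
     (\<forall>e. src e \<noteq> tgt e) \<and>
     inj (\<lambda>e. {src e, tgt e})"

definition graph_adj :: "('e \<Rightarrow> 'n) \<Rightarrow> ('e \<Rightarrow> 'n) \<Rightarrow> 'n \<Rightarrow> 'n \<Rightarrow> bool" where
  "graph_adj src tgt u v \<longleftrightarrow> (\<exists>e. {src e, tgt e} = {u, v})"

definition graph_connected :: "('e \<Rightarrow> 'n) \<Rightarrow> ('e \<Rightarrow> 'n) \<Rightarrow> bool" where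
  "graph_connected src tgt \<longleftrightarrow> (\<forall>u v. (graph_adj src tgt)\<^sup>*\<^sup>* u v)"

definition incidence_matrix :: "('e \<Rightarrow> 'n) \<Rightarrow> ('e \<Rightarrow> 'n) \<Rightarrow> real^'n^'e" where
  "incidence_matrix src tgt = (\<chi> e k. if k = src e then 1 else if k = tgt e then -1 else 0)"

definition kron :: "real^'b^'a \<Rightarrow> real^'d^'c \<Rightarrow> real^('b \<times> 'd)^('a \<times> 'c)" where
  "kron P Q = (\<chi> r k. P $ fst r $ fst k * Q $ snd r $ snd k)"

definition col_block :: "real^('n::finite \<times> 't::finite)^'r \<Rightarrow> 'n \<Rightarrow> real^'t^'r" where
  "col_block A i = (\<chi> r b. A $ r $ (i, b))"

end

theory Submission
  imports Defs
begin

declare transpose_matrix_vector[simp del]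

lemma sum_mat_vec: "(\<Sum>i\<in>I. (B i :: real^'a^'b)) *v x = (\<Sum>i\<in>I. B i *v x)"
  by (induction I rule: infinite_finite_induct) (auto simp: matrix_vector_mult_add_rdistrib)

lemma dot_tr: "((A::real^'a^'b) *v u) \<bullet> v = u \<bullet> (transpose A *v v)"
  by (metis dot_lmul_matrix inner_commute transpose_matrix_vector)

lemma range_from_orth:
  fixes S :: "real^'a^'b"
  assumes "\<And>x. transpose S *v x = 0 \<Longrightarrow> v \<bullet> x = 0"
  shows "v \<in> range (\<lambda>x. S *v x)"
proof -
  let ?R = "range (\<lambda>x. S *v x)"
  have sub: "subspace ?R"
    using linear_subspace_image[OF matrix_vector_mul_linear subspace_UNIV, of S] by simp
  then have sp: "span ?R = ?R" by (simp add: span_eq_iff)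
  obtain p w where p: "p \<in> span ?R" and w: "\<And>u. u \<in> span ?R \<Longrightarrow> orthogonal w u" and v: "v = p + w"
    using orthogonal_subspace_decomp_exists by blast
  have "transpose S *v w = 0"
  proof -
    have "(transpose S *v w) \<bullet> z = 0" for z
      proof -
      have "S *v z \<in> span ?R" by (rule span_base) simp
      then have "w \<bullet> (S *v z) = 0" using w orthogonal_def by blast
      then show ?thesis using dot_tr[of S z w] by (metis inner_commute)
    qed
    from this[of "transpose S *v w"] show ?thesis by simp
  qed
  then have "v \<bullet> w = 0" by (rule assms)
  moreover have "p \<bullet> w = 0" using w[OF p] by (simp add: orthogonal_def inner_commute)
  ultimately have "w \<bullet> w = 0" using v by (simp add: inner_add_left)
  then have "w = 0" by simp
  then show ?thesis using v p sp by simp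
qed

lemma pd_inv:
  fixes M :: "real^'t^'y"
  assumes "rank M = CARD('t)"
  shows "u \<bullet> (matrix_inv (transpose M ** M) *v u) \<ge> 0"
    and "u \<bullet> (matrix_inv (transpose M ** M) *v u) = 0 \<Longrightarrow> u = 0"
proof -
  let ?G = "transpose M ** M"
  have inj: "inj ((*v) M)" using assms full_rank_injective by blast
  have "inj ((*v) ?G)"
  proof (rule injI)
    fix a b assume "?G *v a = ?G *v b"
    then have "?G *v (a - b) = 0" by (simp add: matrix_vector_mult_diff_distrib)
    then have "(M *v (a - b)) \<bullet> (M *v (a - b)) = 0"
      by (simp add: dot_tr matrix_vector_mul_assoc)
    then have "M *v (a - b) = 0" by simp
    then show "a = b" using inj
      by (metis injD matrix_vector_mult_diff_distrib eq_iff_diff_eq_0)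
  qed
  then have inv: "invertible ?G"
    using matrix_left_invertible_injective invertible_left_inverse by blast
  then have GP: "?G ** matrix_inv ?G = mat 1"
  proof -
    have "\<exists>A'. ?G ** A' = mat 1 \<and> A' ** ?G = mat 1" using inv unfolding invertible_def by blast
    then have "?G ** matrix_inv ?G = mat 1 \<and> matrix_inv ?G ** ?G = mat 1"
      unfolding matrix_inv_def by (rule someI_ex)
    then show ?thesis by blast
  qed
  define w where "w = matrix_inv ?G *v u"
  have u: "u = ?G *v w" unfolding w_def using GP by (simp add: matrix_vector_mul_assoc)
  have eq: "u \<bullet> (matrix_inv ?G *v u) = (M *v w) \<bullet> (M *v w)"
  proof -
    have "u \<bullet> (matrix_inv ?G *v u) = (?G *v w) \<bullet> w" unfolding w_def[symmetric] using u by simp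
    also have "\<dots> = (transpose M *v (M *v w)) \<bullet> w" by (simp add: matrix_vector_mul_assoc)
    also have "\<dots> = (M *v w) \<bullet> (M *v w)" using dot_tr[of "transpose M" "M *v w" w] by simp
    finally show ?thesis .
  qed
  show "u \<bullet> (matrix_inv ?G *v u) \<ge> 0" using eq by simp
  assume "u \<bullet> (matrix_inv ?G *v u) = 0"
  then have "M *v w = 0" using eq by simp
  then have "w = 0" using inj by (metis injD matrix_vector_mult_0_right)
  then show "u = 0" using u by simp
qed

theorem lemma2:
  fixes src tgt :: "'e::finite \<Rightarrow> 'n::finite"
    and M :: "'n \<Rightarrow> real^'t::finite^'y::finite"
    and y :: "'n \<Rightarrow> real^'y"
  assumes "simple_oriented_graph src tgt"
    and "graph_connected src tgt"
    and "\<And>i. rank (M i) = CARD('t)"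
  defines "A \<equiv> kron (incidence_matrix src tgt) (mat 1 :: real^'t^'t)"
  defines "S \<equiv> (\<Sum>i\<in>UNIV. col_block A i ** matrix_inv (transpose (M i) ** M i)
                    ** transpose (col_block A i))"
    and "s \<equiv> - (\<Sum>i\<in>UNIV. (col_block A i ** matrix_inv (transpose (M i) ** M i)
                    ** transpose (M i)) *v y i)"
  shows "s \<in> range (\<lambda>x. S *v x)"
proof (rule range_from_orth)
  fix x assume x: "transpose S *v x = 0"
  define C where "C i = col_block A i" for i
  define P where "P i = matrix_inv (transpose (M i) ** M i)" for i
  define q where "q i = transpose (C i) *v x" for i
  have "x \<bullet> (S *v x) = (transpose S *v x) \<bullet> x" by (metis dot_tr inner_commute)
  then have "0 = x \<bullet> (S *v x)" using x by simp
  also have "\<dots> = (\<Sum>i\<in>UNIV. x \<bullet> ((C i ** P i ** transpose (C i)) *v x))"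
    unfolding S_def C_def P_def by (simp add: sum_mat_vec inner_sum_right)
  also have "\<dots> = (\<Sum>i\<in>UNIV. q i \<bullet> (P i *v q i))"
  proof (rule sum.cong[OF refl])
    fix i
    have "x \<bullet> ((C i ** P i ** transpose (C i)) *v x) = (C i *v (P i *v q i)) \<bullet> x"
      by (simp add: q_def matrix_vector_mul_assoc matrix_mul_assoc inner_commute)
    also have "\<dots> = (P i *v q i) \<bullet> q i" unfolding q_def by (rule dot_tr)
    finally show "x \<bullet> ((C i ** P i ** transpose (C i)) *v x) = q i \<bullet> (P i *v q i)"
      by (simp add: inner_commute)
  qed
  finally have z: "(\<Sum>i\<in>UNIV. q i \<bullet> (P i *v q i)) = 0" by simp
  have nn: "\<And>i. q i \<bullet> (P i *v q i) \<ge> 0" unfolding P_def using pd_inv(1) assms(3) by blast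
  have "q i \<bullet> (P i *v q i) = 0" for i
    using z nn sum_nonneg_eq_0_iff[of UNIV "\<lambda>i. q i \<bullet> (P i *v q i)"] by simp
  then have q0: "q i = 0" for i unfolding P_def using pd_inv(2) assms(3) by blast
  have "s \<bullet> x = - (\<Sum>i\<in>UNIV. ((C i ** P i ** transpose (M i)) *v y i) \<bullet> x)"
    unfolding s_def C_def P_def by (simp add: inner_sum_left)
  also have "\<dots> = - (\<Sum>i\<in>UNIV. ((P i ** transpose (M i)) *v y i) \<bullet> q i)"
  proof -
    have "((C i ** P i ** transpose (M i)) *v y i) \<bullet> x = ((P i ** transpose (M i)) *v y i) \<bullet> q i" for i
    proof -
      have "((C i ** P i ** transpose (M i)) *v y i) \<bullet> x = (C i *v ((P i ** transpose (M i)) *v y i)) \<bullet> x"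
        by (simp add: matrix_vector_mul_assoc matrix_mul_assoc)
      also have "\<dots> = ((P i ** transpose (M i)) *v y i) \<bullet> q i" unfolding q_def by (rule dot_tr)
      finally show ?thesis .
    qed
    then show ?thesis by simp
  qed
  also have "\<dots> = 0" using q0 by simp
  finally show "s \<bullet> x = 0" .
qed

end
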